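(* If $\alpha$ is a half-space quasiorder on a set $A$, then there exist linear orders $R_1,R_2$ on $A/(\alpha\cap\alpha^{-1})$ with $r_\alpha=R_1\cap R_2$; in particular the partial order $r_\alpha$ has order dimension at most $2$.
   Context: A quasiorder on $A$ is a reflexive and transitive relation; $\Delta_A=\{(a,a)\mid a\in A\}$. A quasiorder $\alpha$ on $A$ is a half-space if there is a quasiorder $\beta$ on $A$ with $\alpha\cup\beta=A\times A$ and $\alpha\cap\beta=\Delta_A$. For a quasiorder $\gamma$, $r_\gamma$ is the induced partial order on $A/(\gamma\cap\gamma^{-1})$: $([a],[b])\in r_\gamma$ iff $(a,b)\in\gamma$. The order dimension of a partial order is the least cardinality of a set of linear extensions of it whose intersection is the partial order. *)

theory Defs
  imports Main
begin

definition quasiorder_on :: "'a set \<Rightarrow> 'a rel \<Rightarrow> bool" where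
  "quasiorder_on A \<alpha> \<longleftrightarrow> refl_on A \<alpha> \<and> trans \<alpha>"

definition half_space :: "'a set \<Rightarrow> 'a rel \<Rightarrow> bool" where
  "half_space A \<alpha> \<longleftrightarrow> quasiorder_on A \<alpha> \<and>
     (\<exists>\<beta>. quasiorder_on A \<beta> \<and> \<alpha> \<union> \<beta> = A \<times> A \<and> \<alpha> \<inter> \<beta> = Id_on A)"

definition qkernel :: "'a rel \<Rightarrow> 'a rel" where
  "qkernel \<gamma> = \<gamma> \<inter> \<gamma>\<inverse>"

definition induced_order :: "'a rel \<Rightarrow> 'a set rel" where
  "induced_order \<gamma> = {(qkernel \<gamma> `` {a}, qkernel \<gamma> `` {b}) | a b. (a, b) \<in> \<gamma>}"

definition realizer :: "'b set \<Rightarrow> 'b rel \<Rightarrow> 'b rel set \<Rightarrow> bool" where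
  "realizer X r L \<longleftrightarrow> L \<noteq> {} \<and> (\<forall>R\<in>L. linear_order_on X R \<and> r \<subseteq> R) \<and> \<Inter> L = r"

definition order_dim_le :: "'b set \<Rightarrow> 'b rel \<Rightarrow> nat \<Rightarrow> bool" where
  "order_dim_le X r k \<longleftrightarrow> (\<exists>L. realizer X r L \<and> finite L \<and> card L \<le> k)"

end

theory Submission
  imports Defs
begin

definition qimg :: "'a rel \<Rightarrow> 'a rel \<Rightarrow> 'a set rel" where
  "qimg K L = {(K``{x}, K``{y}) | x y. (x,y) \<in> L}"

lemma qimg_mem:
  assumes eq: "equiv A K" and sub: "L \<subseteq> A \<times> A" and tr: "trans L" and KL: "K \<subseteq> L"
    and x: "x \<in> A" and y: "y \<in> A"
  shows "(K``{x}, K``{y}) \<in> qimg K L \<longleftrightarrow> (x,y) \<in> L"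
proof
  assume "(K``{x}, K``{y}) \<in> qimg K L"
  then obtain x' y' where e: "K``{x} = K``{x'}" "K``{y} = K``{y'}" and l: "(x',y') \<in> L"
    unfolding qimg_def by auto
  have "x' \<in> A" "y' \<in> A" using l sub by auto
  then have "(x,x') \<in> K" "(y,y') \<in> K" using e eq x y eq_equiv_class_iff by metis+
  then have "(x,x') \<in> L" "(y',y) \<in> L" using KL eq unfolding equiv_def sym_def by auto
  then show "(x,y) \<in> L" using l tr unfolding trans_def by blast
qed (auto simp: qimg_def)

lemma qimg_lin:
  assumes eq: "equiv A K" and sub: "L \<subseteq> A \<times> A" and rf: "refl_on A L" and tr: "trans L"
    and tot: "total_on A L" and ker: "L \<inter> L\<inverse> = K"
  shows "linear_order_on (A//K) (qimg K L)"
proof -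
  have KL: "K \<subseteq> L" using ker by auto
  note mem = qimg_mem[OF eq sub tr KL]
  have s: "qimg K L \<subseteq> (A//K) \<times> (A//K)"
    using sub unfolding qimg_def quotient_def by auto
  have r: "refl_on (A//K) (qimg K L)"
    unfolding refl_on_def quotient_def using mem rf unfolding refl_on_def by auto
  have t: "trans (qimg K L)"
  proof (rule transI)
    fix X Y Z assume a: "(X,Y) \<in> qimg K L" "(Y,Z) \<in> qimg K L"
    then obtain x y z where "X = K``{x}" "Y = K``{y}" "Z = K``{z}" "x \<in> A" "y \<in> A" "z \<in> A"
      using s unfolding quotient_def by blast
    then show "(X,Z) \<in> qimg K L" using a mem tr unfolding trans_def by metis
  qed
  have an: "antisym (qimg K L)"
  proof (rule antisymI)
    fix X Y assume a: "(X,Y) \<in> qimg K L" "(Y,X) \<in> qimg K L"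
    then obtain x y where xy: "X = K``{x}" "Y = K``{y}" "x \<in> A" "y \<in> A"
      using s unfolding quotient_def by blast
    then have "(x,y) \<in> K" using a mem ker by auto
    then show "X = Y" using xy eq equiv_class_eq by metis
  qed
  have to: "total_on (A//K) (qimg K L)"
    unfolding total_on_def
  proof (intro ballI impI)
    fix X Y assume "X \<in> A//K" "Y \<in> A//K" "X \<noteq> Y"
    then obtain x y where xy: "X = K``{x}" "Y = K``{y}" "x \<in> A" "y \<in> A"
      unfolding quotient_def by blast
    then have "(x,y) \<in> L \<or> (y,x) \<in> L" using tot rf unfolding total_on_def refl_on_def by metis
    then show "(X,Y) \<in> qimg K L \<or> (Y,X) \<in> qimg K L" using xy mem by auto
  qed
  show ?thesis using s r t an to
    unfolding linear_order_on_def partial_order_on_def preorder_on_def by auto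
qed

theorem corollary2p6:
  fixes A :: "'a set" and \<alpha> :: "'a rel"
  assumes "half_space A \<alpha>"
  shows "(\<exists>R1 R2. linear_order_on (A // qkernel \<alpha>) R1 \<and> linear_order_on (A // qkernel \<alpha>) R2
            \<and> induced_order \<alpha> = R1 \<inter> R2)
         \<and> order_dim_le (A // qkernel \<alpha>) (induced_order \<alpha>) 2"
proof -
  obtain \<beta> where ra: "refl_on A \<alpha>" and ta: "trans \<alpha>" and rb: "refl_on A \<beta>" and tb: "trans \<beta>"
    and un: "\<alpha> \<union> \<beta> = A \<times> A" and it: "\<alpha> \<inter> \<beta> = Id_on A"
    using assms unfolding half_space_def quasiorder_on_def by blast
  define K where "K = qkernel \<alpha>"
  have sa: "\<alpha> \<subseteq> A \<times> A" using un by auto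
  have eq: "equiv A K" unfolding K_def qkernel_def
    using sa ra ta unfolding equiv_def refl_on_def sym_def trans_def by blast
  define inc where "inc x y \<longleftrightarrow> x \<in> A \<and> y \<in> A \<and> (x,y) \<notin> \<alpha> \<and> (y,x) \<notin> \<alpha>" for x y
  have key1: "(z,y) \<in> \<alpha>" if "inc x y" "(z,x) \<in> \<alpha>" "z \<noteq> x" for x y z
  proof (rule ccontr)
    assume n: "(z,y) \<notin> \<alpha>"
    have "z \<in> A" using that sa by auto
    then have "(z,y) \<in> \<beta>" "(y,x) \<in> \<beta>" using n that un unfolding inc_def by auto
    then have "(z,x) \<in> \<beta>" using tb unfolding trans_def by blast
    then have "(z,x) \<in> Id_on A" using it that by blast
    then show False using that by auto
  qed
  have key2: "(y,z) \<in> \<alpha>" if "inc x y" "(x,z) \<in> \<alpha>" "z \<noteq> x" for x y z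
  proof (rule ccontr)
    assume n: "(y,z) \<notin> \<alpha>"
    have "z \<in> A" using that sa by auto
    then have "(y,z) \<in> \<beta>" "(x,y) \<in> \<beta>" using n that un unfolding inc_def by auto
    then have "(x,z) \<in> \<beta>" using tb unfolding trans_def by blast
    then have "(x,z) \<in> Id_on A" using it that by blast
    then show False using that by auto
  qed
  have incsym: "inc y x" if "inc x y" for x y using that unfolding inc_def by auto
  have incne: "x \<noteq> y" if "inc x y" for x y using that ra unfolding inc_def refl_on_def by auto
  have inctr: "inc x z" if "inc x y" "inc y z" "x \<noteq> z" for x y z
  proof -
    have "(x,z) \<notin> \<alpha>"
    proof
      assume "(x,z) \<in> \<alpha>"
      then have "(x,y) \<in> \<alpha>" using key1[OF incsym[OF that(2)]] that by blast
      then show False using that unfolding inc_def by auto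
    qed
    moreover have "(z,x) \<notin> \<alpha>"
    proof
      assume "(z,x) \<in> \<alpha>"
      then have "(y,x) \<in> \<alpha>" using key2[OF incsym[OF that(2)]] that by blast
      then show False using that unfolding inc_def by auto
    qed
    ultimately show ?thesis using that unfolding inc_def by auto
  qed
  obtain W where W: "well_order_on A W" using well_order_on by blast
  then have lW: "linear_order_on A W" unfolding well_order_on_def by auto
  then have sW: "W \<subseteq> A \<times> A" and tW: "trans W" and aW: "antisym W" and toW: "total_on A W"
    unfolding linear_order_on_def partial_order_on_def preorder_on_def by auto
  have main: "linear_order_on A L \<and> False \<or> (L \<subseteq> A \<times> A \<and> refl_on A L \<and> trans L \<and> total_on A L \<and> L \<inter> L\<inverse> = K)"
    if LW: "linear_order_on A V" and LD: "L = \<alpha> \<union> {(x,y). inc x y \<and> (x,y) \<in> V}" for L V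
  proof -
    have sV: "V \<subseteq> A \<times> A" and tV: "trans V" and aV: "antisym V" and toV: "total_on A V"
      using LW unfolding linear_order_on_def partial_order_on_def preorder_on_def by auto
    have s: "L \<subseteq> A \<times> A" using LD sa unfolding inc_def by auto
    have r: "refl_on A L" using LD ra unfolding refl_on_def by auto
    have t: "trans L"
    proof (rule transI)
      fix x y z assume a: "(x,y) \<in> L" "(y,z) \<in> L"
      show "(x,z) \<in> L"
      proof (cases "(x,y) \<in> \<alpha>")
        case xy: True
        show ?thesis
        proof (cases "(y,z) \<in> \<alpha>")
          case True then show ?thesis using xy ta LD unfolding trans_def by blast
        next
          case False
          then have i: "inc y z" "(y,z) \<in> V" using a LD by auto
          show ?thesis
          proof (cases "x = y")
            case True then show ?thesis using a by simp
          next
            case False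
            then have "(x,z) \<in> \<alpha>" using key1[OF i(1) xy] by blast
            then show ?thesis using LD by auto
          qed
        qed
      next
        case xyn: False
        then have i: "inc x y" "(x,y) \<in> V" using a LD by auto
        show ?thesis
        proof (cases "(y,z) \<in> \<alpha>")
          case yz: True
          show ?thesis
          proof (cases "z = y")
            case True then show ?thesis using a by simp
          next
            case False
            then have "(x,z) \<in> \<alpha>" using key2[OF incsym[OF i(1)] yz] by blast
            then show ?thesis using LD by auto
          qed
        next
          case False
          then have j: "inc y z" "(y,z) \<in> V" using a LD by auto
          show ?thesis
          proof (cases "x = z")
            case True
            then have "x = y" using i j aV unfolding antisym_def by blast
            then show ?thesis using incne i by blast
          next
            case False
            then have "inc x z" using inctr i j by blast
            moreover have "(x,z) \<in> V" using i j tV unfolding trans_def by blast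
            ultimately show ?thesis using LD by auto
          qed
        qed
      qed
    qed
    have to: "total_on A L" unfolding total_on_def
    proof (intro ballI impI)
      fix x y assume xy: "x \<in> A" "y \<in> A" "x \<noteq> y"
      show "(x,y) \<in> L \<or> (y,x) \<in> L"
      proof (cases "inc x y")
        case True
        then show ?thesis using toV xy incsym LD unfolding total_on_def by blast
      next
        case False then show ?thesis using xy LD unfolding inc_def by auto
      qed
    qed
    have k: "L \<inter> L\<inverse> = K"
    proof
      show "K \<subseteq> L \<inter> L\<inverse>" unfolding K_def qkernel_def LD by auto
    next
      show "L \<inter> L\<inverse> \<subseteq> K"
      proof
        fix p assume p: "p \<in> L \<inter> L\<inverse>"
        obtain x y where pe: "p = (x,y)" by (cases p)
        show "p \<in> K"
        proof (cases "(x,y) \<in> \<alpha> \<and> (y,x) \<in> \<alpha>")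
          case True then show ?thesis unfolding pe K_def qkernel_def by auto
        next
          case False
          then have "inc x y" "(x,y) \<in> V" "(y,x) \<in> V" using p pe LD unfolding inc_def by auto
          then show ?thesis using aV incne unfolding antisym_def by blast
        qed
      qed
    qed
    show ?thesis using s r t to k by blast
  qed
  define L1 where "L1 = \<alpha> \<union> {(x,y). inc x y \<and> (x,y) \<in> W}"
  define L2 where "L2 = \<alpha> \<union> {(x,y). inc x y \<and> (x,y) \<in> W\<inverse>}"
  have lWc: "linear_order_on A (W\<inverse>)" using lW
    unfolding linear_order_on_def partial_order_on_def total_on_def antisym_def by auto
  have m1: "L1 \<subseteq> A \<times> A \<and> refl_on A L1 \<and> trans L1 \<and> total_on A L1 \<and> L1 \<inter> L1\<inverse> = K"
    using main[OF lW L1_def] by blast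
  have m2: "L2 \<subseteq> A \<times> A \<and> refl_on A L2 \<and> trans L2 \<and> total_on A L2 \<and> L2 \<inter> L2\<inverse> = K"
    using main[OF lWc L2_def] by blast
  define R1 where "R1 = qimg K L1"
  define R2 where "R2 = qimg K L2"
  have l1: "linear_order_on (A//K) R1" unfolding R1_def using qimg_lin[OF eq] m1 by blast
  have l2: "linear_order_on (A//K) R2" unfolding R2_def using qimg_lin[OF eq] m2 by blast
  have K1: "K \<subseteq> L1" using m1 by blast
  have K2: "K \<subseteq> L2" using m2 by blast
  have Ka: "K \<subseteq> \<alpha>" unfolding K_def qkernel_def by auto
  have io: "induced_order \<alpha> = qimg K \<alpha>"
    unfolding induced_order_def qimg_def K_def by simp
  have mem1: "(K``{x}, K``{y}) \<in> R1 \<longleftrightarrow> (x,y) \<in> L1" if "x \<in> A" "y \<in> A" for x y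
    unfolding R1_def using qimg_mem[OF eq _ _ K1 that] m1 by blast
  have mem2: "(K``{x}, K``{y}) \<in> R2 \<longleftrightarrow> (x,y) \<in> L2" if "x \<in> A" "y \<in> A" for x y
    unfolding R2_def using qimg_mem[OF eq _ _ K2 that] m2 by blast
  have memA: "(K``{x}, K``{y}) \<in> induced_order \<alpha> \<longleftrightarrow> (x,y) \<in> \<alpha>" if "x \<in> A" "y \<in> A" for x y
    unfolding io using qimg_mem[OF eq sa ta Ka that] by blast
  have sub1: "R1 \<subseteq> (A//K) \<times> (A//K)" using l1
    unfolding linear_order_on_def partial_order_on_def preorder_on_def by auto
  have inter: "induced_order \<alpha> = R1 \<inter> R2"
  proof
    show "induced_order \<alpha> \<subseteq> R1 \<inter> R2"
      unfolding io R1_def R2_def qimg_def L1_def L2_def by auto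
  next
    show "R1 \<inter> R2 \<subseteq> induced_order \<alpha>"
    proof
      fix p assume p: "p \<in> R1 \<inter> R2"
      then obtain x y where xy: "p = (K``{x}, K``{y})" "x \<in> A" "y \<in> A"
        using sub1 unfolding quotient_def by blast
      then have "(x,y) \<in> L1" "(x,y) \<in> L2" using p mem1 mem2 by auto
      then have "(x,y) \<in> \<alpha>" unfolding L1_def L2_def
        using aW incne unfolding antisym_def by blast
      then show "p \<in> induced_order \<alpha>" using memA xy by auto
    qed
  qed
  have dim: "order_dim_le (A//K) (induced_order \<alpha>) 2"
    unfolding order_dim_le_def realizer_def
  proof (intro exI[of _ "{R1,R2}"] conjI)
    show "card {R1, R2} \<le> 2" by (simp add: card_insert_if)
  qed (use l1 l2 inter in auto)
  show ?thesis using l1 l2 inter dim unfolding K_def by blast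
qed

end
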